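(* For any compilation chain for partial programs and any trace relation ${\sim}\subseteq\mathit{Trace}_S\times\mathit{Trace}_T$ with existential and universal images $\tilde\tau,\tilde\sigma$, the following are equivalent: (i) $\mathit{RSP}^{\tilde\tau}$: for every source partial program $P$ and every $\pi_S\subseteq\mathit{Trace}_S$, $P\models_R\pi_S$ implies $P{\downarrow}\models_R(\mathit{Safe}\circ\tilde\tau)(\pi_S)$; (ii) $\mathit{RSC}^{\sim}$: for every $P$, every target context $C_T$, every target trace $t$ and every finite prefix $m\le t$, if $C_T[P{\downarrow}]\rightsquigarrow t$ then there exist a source context $C_S$, a target trace $t'\ge m$ and a source trace $s\sim t'$ with $C_S[P]\rightsquigarrow s$; (iii) $\mathit{RSP}^{\tilde\sigma}$: for every $P$ and every target safety property $\pi_T$, $P\models_R\tilde\sigma(\pi_T)$ implies $P{\downarrow}\models_R\pi_T$.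
   Context: A compilation chain for partial programs consists of source partial programs $P$ and source contexts $C_S$, target partial programs and target contexts $C_T$, linking $C[P]$ into whole programs, sets $\mathit{Trace}_S,\mathit{Trace}_T$ of traces, semantics relations $W\rightsquigarrow t$ for whole programs, and a compiler $P\mapsto P{\downarrow}$. Traces are finite or infinite sequences of events; $m\le t$ means $m$ is a finite prefix of $t$ (and $t'\ge m$ means $m\le t'$). $P\models_R\pi$ iff for every context $C$ at the same level and every $t$, $C[P]\rightsquigarrow t$ implies $t\in\pi$. A target property $\pi$ is a safety property iff for every $t\notin\pi$ there is $m\le t$ such that every $t'$ with $m\le t'$ satisfies $t'\notin\pi$. $\mathit{Safe}(\pi)$ is the intersection of all target safety properties containing $\pi$. The existential image of $\sim$ is $\tilde\tau(\pi)=\{t\mid\exists s.\ s\sim t\wedge s\in\pi\}$ and its universal image is $\tilde\sigma(\pi)=\{s\mid\forall t.\ s\sim t\Rightarrow t\in\pi\}$. *)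

theory Defs
  imports Main "HOL-Library.Sublist"
begin

datatype 'e trace = Fin "'e list" | Inf "nat \<Rightarrow> 'e"

fun tprefix :: "'e list \<Rightarrow> 'e trace \<Rightarrow> bool" where
  "tprefix m (Fin l) = prefix m l"
| "tprefix m (Inf f) = (m = map f [0..<length m])"

definition safety :: "'e trace set \<Rightarrow> bool" where
  "safety \<pi> \<longleftrightarrow> (\<forall>t. t \<notin> \<pi> \<longrightarrow> (\<exists>m. tprefix m t \<and> (\<forall>t'. tprefix m t' \<longrightarrow> t' \<notin> \<pi>)))"

definition Safe :: "'e trace set \<Rightarrow> 'e trace set" where
  "Safe \<pi> = \<Inter> {S. safety S \<and> \<pi> \<subseteq> S}"

definition tau_img :: "('s \<Rightarrow> 't \<Rightarrow> bool) \<Rightarrow> 's set \<Rightarrow> 't set" where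
  "tau_img rel \<pi> = {t. \<exists>s. rel s t \<and> s \<in> \<pi>}"

definition sigma_img :: "('s \<Rightarrow> 't \<Rightarrow> bool) \<Rightarrow> 't set \<Rightarrow> 's set" where
  "sigma_img rel \<pi> = {s. \<forall>t. rel s t \<longrightarrow> t \<in> \<pi>}"

definition rsat :: "('c \<Rightarrow> 'p \<Rightarrow> 'w) \<Rightarrow> ('w \<Rightarrow> 'tr \<Rightarrow> bool) \<Rightarrow> 'p \<Rightarrow> 'tr set \<Rightarrow> bool" where
  "rsat link sem P \<pi> \<longleftrightarrow> (\<forall>C t. sem (link C P) t \<longrightarrow> t \<in> \<pi>)"

end

theory Submission
  imports Defs
begin

lemma safety_notpre: "safety {t'. \<not> tprefix m t'}"
  unfolding safety_def by auto

lemma safe_sub: "safety S \<Longrightarrow> \<pi> \<subseteq> S \<Longrightarrow> Safe \<pi> \<subseteq> S"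
  unfolding Safe_def by auto

theorem theorem5p2:
  fixes linkS :: "'cs \<Rightarrow> 'ps \<Rightarrow> 'ws"
    and semS :: "'ws \<Rightarrow> 'es trace \<Rightarrow> bool"
    and linkT :: "'ct \<Rightarrow> 'pt \<Rightarrow> 'wt"
    and semT :: "'wt \<Rightarrow> 'et trace \<Rightarrow> bool"
    and comp :: "'ps \<Rightarrow> 'pt"
    and rel :: "'es trace \<Rightarrow> 'et trace \<Rightarrow> bool"
  shows "((\<forall>P \<pi>S. rsat linkS semS P \<pi>S \<longrightarrow> rsat linkT semT (comp P) (Safe (tau_img rel \<pi>S)))
          \<longleftrightarrow>
          (\<forall>P CT t m. tprefix m t \<longrightarrow> semT (linkT CT (comp P)) t \<longrightarrow>
             (\<exists>CS t' s. tprefix m t' \<and> rel s t' \<and> semS (linkS CS P) s)))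
       \<and>
         ((\<forall>P CT t m. tprefix m t \<longrightarrow> semT (linkT CT (comp P)) t \<longrightarrow>
             (\<exists>CS t' s. tprefix m t' \<and> rel s t' \<and> semS (linkS CS P) s))
          \<longleftrightarrow>
          (\<forall>P \<pi>T. safety \<pi>T \<longrightarrow> rsat linkS semS P (sigma_img rel \<pi>T) \<longrightarrow> rsat linkT semT (comp P) \<pi>T))"
  (is "(?I \<longleftrightarrow> ?II) \<and> (?II \<longleftrightarrow> ?III)")
proof -
  have a: "?II" if I: "?I"
  proof (intro allI impI)
    fix P CT t m
    assume pm: "tprefix m t" and st: "semT (linkT CT (comp P)) t"
    show "\<exists>CS t' s. tprefix m t' \<and> rel s t' \<and> semS (linkS CS P) s"
    proof (rule ccontr)
      assume no: "\<not> ?thesis"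
      let ?piS = "{s. \<exists>CS. semS (linkS CS P) s}"
      have "rsat linkS semS P ?piS" unfolding rsat_def by auto
      with I have r: "rsat linkT semT (comp P) (Safe (tau_img rel ?piS))" by blast
      have "tau_img rel ?piS \<subseteq> {t'. \<not> tprefix m t'}"
        using no unfolding tau_img_def by auto
      hence "Safe (tau_img rel ?piS) \<subseteq> {t'. \<not> tprefix m t'}"
        by (rule safe_sub[OF safety_notpre])
      with r st pm show False unfolding rsat_def by auto
    qed
  qed
  have b: "?I" if II: "?II"
  proof (intro allI impI)
    fix P \<pi>S
    assume rs: "rsat linkS semS P \<pi>S"
    show "rsat linkT semT (comp P) (Safe (tau_img rel \<pi>S))"
      unfolding rsat_def Safe_def
    proof (intro allI impI InterI)
      fix C t S assume st: "semT (linkT C (comp P)) t" and S: "S \<in> {S. safety S \<and> tau_img rel \<pi>S \<subseteq> S}"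
      show "t \<in> S"
      proof (rule ccontr)
        assume "t \<notin> S"
        with S obtain m where m: "tprefix m t" "\<forall>t'. tprefix m t' \<longrightarrow> t' \<notin> S"
          unfolding safety_def by blast
        from II m(1) st obtain CS t' s where "tprefix m t'" "rel s t'" "semS (linkS CS P) s"
          by blast
        with rs S m(2) show False unfolding rsat_def tau_img_def by blast
      qed
    qed
  qed
  have c: "?III" if II: "?II"
  proof (intro allI impI)
    fix P \<pi>T
    assume sf: "safety \<pi>T" and rs: "rsat linkS semS P (sigma_img rel \<pi>T)"
    show "rsat linkT semT (comp P) \<pi>T" unfolding rsat_def
    proof (intro allI impI)
      fix C t assume st: "semT (linkT C (comp P)) t"
      show "t \<in> \<pi>T"
      proof (rule ccontr)
        assume "t \<notin> \<pi>T"
        with sf obtain m where m: "tprefix m t" "\<forall>t'. tprefix m t' \<longrightarrow> t' \<notin> \<pi>T"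
          unfolding safety_def by blast
        from II m(1) st obtain CS t' s where "tprefix m t'" "rel s t'" "semS (linkS CS P) s"
          by blast
        with rs m(2) show False unfolding rsat_def sigma_img_def by blast
      qed
    qed
  qed
  have d: "?II" if III: "?III"
  proof (intro allI impI)
    fix P CT t m
    assume pm: "tprefix m t" and st: "semT (linkT CT (comp P)) t"
    show "\<exists>CS t' s. tprefix m t' \<and> rel s t' \<and> semS (linkS CS P) s"
    proof (rule ccontr)
      assume no: "\<not> ?thesis"
      have "rsat linkS semS P (sigma_img rel {t'. \<not> tprefix m t'})"
        using no unfolding rsat_def sigma_img_def by blast
      with III safety_notpre have "rsat linkT semT (comp P) {t'. \<not> tprefix m t'}" by blast
      with st pm show False unfolding rsat_def by auto
    qed
  qed
  show ?thesis using a b c d by blast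
qed

end
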